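(* Let $\mathbb{H}$ be a finite-dimensional complex Hilbert space with $\dim\mathbb{H}\ge 2$, let $\alpha,\beta$ be nonzero complex numbers with $|\alpha|^2+|\beta|^2=1$, and let $|\phi\rangle\in\mathbb{H}$ be a fixed unit vector (fixed means: independent of the input state $|\psi\rangle$; it may be known or unknown). Then there is no probabilistic quantum transformation $\mathcal{F}$ from $\mathbb{H}\otimes\mathbb{H}$ to $\mathbb{H}$ such that for every pure state $\rho_\psi$ on $\mathbb{H}$, $$\mathcal{F}(\rho_\psi\otimes\rho_\phi)=\rho_\varphi,\qquad |\varphi\rangle\propto \alpha|\psi\rangle+\beta|\phi\rangle .$$
   Context: For a unit vector $|\psi\rangle$, $\rho_\psi=|\psi\rangle\langle\psi|$ denotes the corresponding pure state; vectors differing by a global phase define the same state, and $|\varphi\rangle\propto|\chi\rangle$ means $|\varphi\rangle$ equals the normalization of $|\chi\rangle$ up to a global phase (whenever $|\chi\rangle\neq0$). A probabilistic quantum transformation from $\mathbb{H}_1$ to $\mathbb{H}_2$ is a completely positive, trace-non-increasing linear map $\mathcal{F}$ from operators on $\mathbb{H}_1$ to operators on $\mathbb{H}_2$ (equivalently, a unitary on $\mathbb{H}_1$ tensored with ancilla and probe spaces followed by post-selection on a projective measurement outcome); the equation $\mathcal{F}(\rho)=\sigma$ between pure states means $\mathcal{F}(\rho)=p\,\sigma$ for some success probability $p>0$ (which may depend on $\rho$). *)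

theory Defs
  imports "Jordan_Normal_Form.Matrix"
begin

text \<open>Finite-dimensional complex Hilbert space of dimension d is modelled as
  complex column vectors of length d (carrier_vec d); operators are d x d complex matrices.
  The tensor product C^a (x) C^b is C^(a*b) with index i*b + k for basis pair (i,k).\<close>

definition vnorm_sq :: "complex vec \<Rightarrow> real" where
  "vnorm_sq v = (\<Sum>i<dim_vec v. (cmod (v $ i))^2)"

definition is_unit_vec :: "nat \<Rightarrow> complex vec \<Rightarrow> bool" where
  "is_unit_vec d v \<longleftrightarrow> v \<in> carrier_vec d \<and> vnorm_sq v = 1"

definition outer :: "complex vec \<Rightarrow> complex mat" where
  "outer v = mat (dim_vec v) (dim_vec v) (\<lambda>(i,j). v $ i * cnj (v $ j))"

definition pure_state :: "complex vec \<Rightarrow> complex mat" where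
  "pure_state v = complex_of_real (1 / vnorm_sq v) \<cdot>\<^sub>m outer v"

definition kron :: "complex mat \<Rightarrow> complex mat \<Rightarrow> complex mat" where
  "kron A B = mat (dim_row A * dim_row B) (dim_col A * dim_col B)
     (\<lambda>(i,j). A $$ (i div dim_row B, j div dim_col B) * B $$ (i mod dim_row B, j mod dim_col B))"

definition psd :: "nat \<Rightarrow> complex mat \<Rightarrow> bool" where
  "psd n A \<longleftrightarrow> A \<in> carrier_mat n n \<and>
     (\<forall>v \<in> carrier_vec n. let q = (\<Sum>i<n. \<Sum>j<n. cnj (v $ i) * A $$ (i,j) * v $ j)
                           in Im q = 0 \<and> Re q \<ge> 0)"

text \<open>(id_m (x) F)(X) for X an operator on C^m (x) C^d1 (block (a,b) of size d1 x d1)\<close>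
definition ampliate :: "nat \<Rightarrow> nat \<Rightarrow> nat \<Rightarrow> (complex mat \<Rightarrow> complex mat) \<Rightarrow> complex mat \<Rightarrow> complex mat" where
  "ampliate m d1 d2 F X = mat (m * d2) (m * d2)
     (\<lambda>(i,j). F (mat d1 d1 (\<lambda>(k,l). X $$ ((i div d2) * d1 + k, (j div d2) * d1 + l)))
                $$ (i mod d2, j mod d2))"

definition mtrace :: "complex mat \<Rightarrow> complex" where
  "mtrace A = (\<Sum>i<dim_row A. A $$ (i,i))"

definition quantum_op :: "nat \<Rightarrow> nat \<Rightarrow> (complex mat \<Rightarrow> complex mat) \<Rightarrow> bool" where
  "quantum_op d1 d2 F \<longleftrightarrow>
     (\<forall>A \<in> carrier_mat d1 d1. F A \<in> carrier_mat d2 d2) \<and>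
     (\<forall>A \<in> carrier_mat d1 d1. \<forall>B \<in> carrier_mat d1 d1. \<forall>a b :: complex.
         F (a \<cdot>\<^sub>m A + b \<cdot>\<^sub>m B) = a \<cdot>\<^sub>m F A + b \<cdot>\<^sub>m F B) \<and>
     (\<forall>m. \<forall>X. psd (m * d1) X \<longrightarrow> psd (m * d2) (ampliate m d1 d2 F X)) \<and>
     (\<forall>\<rho>. psd d1 \<rho> \<longrightarrow> Re (mtrace (F \<rho>)) \<le> Re (mtrace \<rho>))"

end

theory Submission
  imports Defs
begin

lemma vnorm_pos:
  assumes "j < dim_vec v" "v $ j \<noteq> 0"
  shows "vnorm_sq v > 0"
proof -
  have "(cmod (v $ j))^2 \<le> (\<Sum>i<dim_vec v. (cmod (v $ i))^2)"
    by (rule member_le_sum) (use assms in auto)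
  moreover have "(cmod (v $ j))^2 > 0" using assms by simp
  ultimately show ?thesis unfolding vnorm_sq_def by linarith
qed

lemma unit_is_unit: "k < d \<Longrightarrow> is_unit_vec d (unit_vec d k)"
  "k < d \<Longrightarrow> is_unit_vec d ((-1) \<cdot>\<^sub>v unit_vec d k)"
proof -
  assume k: "k < d"
  have "(\<Sum>i<d. (cmod (unit_vec d k $ i))^2) = (\<Sum>i<d. if i = k then 1 else 0)"
    by (rule sum.cong) (auto simp: unit_vec_def)
  also have "\<dots> = 1" using k by simp
  finally show "is_unit_vec d (unit_vec d k)" unfolding is_unit_vec_def vnorm_sq_def by simp
  have "(\<Sum>i<d. (cmod (((-1) \<cdot>\<^sub>v unit_vec d k) $ i))^2) = (\<Sum>i<d. if i = k then 1 else 0)"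
    by (rule sum.cong) (auto simp: unit_vec_def)
  also have "\<dots> = 1" using k by simp
  finally show "is_unit_vec d ((-1) \<cdot>\<^sub>v unit_vec d k)" unfolding is_unit_vec_def vnorm_sq_def by simp
qed

lemma outer_neg: "outer ((-1) \<cdot>\<^sub>v v) = outer v"
  unfolding outer_def by (rule eq_matI) auto

lemma entry_pure:
  assumes "i < dim_vec v" "j < dim_vec v"
  shows "(complex_of_real p \<cdot>\<^sub>m pure_state v) $$ (i,j)
        = complex_of_real (p / vnorm_sq v) * (v $ i * cnj (v $ j))"
  using assms unfolding pure_state_def outer_def by (simp add: of_real_mult[symmetric] del: of_real_mult)

lemma key:
  fixes \<alpha> \<beta> :: complex
  assumes kd: "k < d" and jd: "j < d" and kj: "k \<noteq> j"
    and phi: "\<phi> \<in> carrier_vec d" and pj: "\<phi> $ j \<noteq> 0"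
    and a: "\<alpha> \<noteq> 0" and b: "\<beta> \<noteq> 0"
    and H: "\<forall>\<psi>. is_unit_vec d \<psi> \<and> \<alpha> \<cdot>\<^sub>v \<psi> + \<beta> \<cdot>\<^sub>v \<phi> \<noteq> 0\<^sub>v d \<longrightarrow>
               (\<exists>p::real. p > 0 \<and>
                  F (kron (outer \<psi>) (outer \<phi>)) = complex_of_real p \<cdot>\<^sub>m pure_state (\<alpha> \<cdot>\<^sub>v \<psi> + \<beta> \<cdot>\<^sub>v \<phi>))"
  shows False
proof -
  define e :: "complex vec" where "e = unit_vec d k"
  define e' where "e' = (-1) \<cdot>\<^sub>v e"
  define x where "x = \<alpha> \<cdot>\<^sub>v e + \<beta> \<cdot>\<^sub>v \<phi>"
  define y where "y = \<alpha> \<cdot>\<^sub>v e' + \<beta> \<cdot>\<^sub>v \<phi>"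
  have dx: "dim_vec x = d" and dy: "dim_vec y = d" using phi by (auto simp: x_def y_def e'_def e_def)
  have xj: "x $ j = \<beta> * \<phi> $ j" using phi jd kj by (simp add: x_def e_def unit_vec_def)
  have yj: "y $ j = \<beta> * \<phi> $ j" using phi jd kj by (simp add: y_def e'_def e_def unit_vec_def)
  have xk: "x $ k = \<alpha> + \<beta> * \<phi> $ k" using phi kd by (simp add: x_def e_def unit_vec_def)
  have yk: "y $ k = - \<alpha> + \<beta> * \<phi> $ k" using phi kd by (simp add: y_def e'_def e_def unit_vec_def)
  have bj: "\<beta> * \<phi> $ j \<noteq> 0" using b pj by simp
  have xn: "x \<noteq> 0\<^sub>v d" using xj bj jd by auto
  have yn: "y \<noteq> 0\<^sub>v d" using yj bj jd by auto
  obtain p where p: "p > 0" "F (kron (outer e) (outer \<phi>)) = complex_of_real p \<cdot>\<^sub>m pure_state x"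
    using H[rule_format, of e] unit_is_unit(1)[OF kd] xn by (auto simp: e_def x_def)
  obtain q where q: "q > 0" "F (kron (outer e') (outer \<phi>)) = complex_of_real q \<cdot>\<^sub>m pure_state y"
    using H[rule_format, of e'] unit_is_unit(2)[OF kd] yn by (auto simp: e'_def e_def y_def)
  have eq: "complex_of_real p \<cdot>\<^sub>m pure_state x = complex_of_real q \<cdot>\<^sub>m pure_state y"
    using p q by (simp add: e'_def outer_neg)
  define c1 where "c1 = p / vnorm_sq x"
  define c2 where "c2 = q / vnorm_sq y"
  have nx: "vnorm_sq x > 0" using vnorm_pos[of j x] dx jd xj bj by simp
  have c1: "c1 > 0" using nx p(1) by (simp add: c1_def)
  have e1: "complex_of_real c1 * (x $ j * cnj (x $ j)) = complex_of_real c2 * (y $ j * cnj (y $ j))"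
    using arg_cong[OF eq, of "\<lambda>M. M $$ (j,j)"] entry_pure[of j x j p] entry_pure[of j y j q] dx dy jd
    by (simp add: c1_def c2_def)
  have "x $ j * cnj (x $ j) \<noteq> 0" using xj bj by simp
  hence c12: "complex_of_real c1 = complex_of_real c2" using e1 xj yj by simp
  have e2: "complex_of_real c1 * (x $ k * cnj (x $ j)) = complex_of_real c2 * (y $ k * cnj (y $ j))"
    using arg_cong[OF eq, of "\<lambda>M. M $$ (k,j)"] entry_pure[of k x j p] entry_pure[of k y j q] dx dy jd kd
    by (simp add: c1_def c2_def)
  have "complex_of_real c1 * cnj (x $ j) \<noteq> 0" using c1 xj bj by simp
  hence "x $ k = y $ k" using e2 c12 xj yj by (simp add: algebra_simps)
  hence "\<alpha> = - \<alpha>" using xk yk by simp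
  thus False using a by simp
qed

theorem theorem1:
  fixes d :: nat and \<alpha> \<beta> :: complex and \<phi> :: "complex vec"
  assumes "d \<ge> 2"
    and "\<alpha> \<noteq> 0" and "\<beta> \<noteq> 0"
    and "(cmod \<alpha>)^2 + (cmod \<beta>)^2 = 1"
    and "is_unit_vec d \<phi>"
  shows "\<not> (\<exists>F. quantum_op (d * d) d F \<and>
            (\<forall>\<psi>. is_unit_vec d \<psi> \<and> \<alpha> \<cdot>\<^sub>v \<psi> + \<beta> \<cdot>\<^sub>v \<phi> \<noteq> 0\<^sub>v d \<longrightarrow>
               (\<exists>p::real. p > 0 \<and>
                  F (kron (outer \<psi>) (outer \<phi>)) = complex_of_real p \<cdot>\<^sub>m pure_state (\<alpha> \<cdot>\<^sub>v \<psi> + \<beta> \<cdot>\<^sub>v \<phi>))))"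
proof
  assume "\<exists>F. quantum_op (d * d) d F \<and>
            (\<forall>\<psi>. is_unit_vec d \<psi> \<and> \<alpha> \<cdot>\<^sub>v \<psi> + \<beta> \<cdot>\<^sub>v \<phi> \<noteq> 0\<^sub>v d \<longrightarrow>
               (\<exists>p::real. p > 0 \<and>
                  F (kron (outer \<psi>) (outer \<phi>)) = complex_of_real p \<cdot>\<^sub>m pure_state (\<alpha> \<cdot>\<^sub>v \<psi> + \<beta> \<cdot>\<^sub>v \<phi>)))"
  then obtain F where H: "\<forall>\<psi>. is_unit_vec d \<psi> \<and> \<alpha> \<cdot>\<^sub>v \<psi> + \<beta> \<cdot>\<^sub>v \<phi> \<noteq> 0\<^sub>v d \<longrightarrow>
               (\<exists>p::real. p > 0 \<and>
                  F (kron (outer \<psi>) (outer \<phi>)) = complex_of_real p \<cdot>\<^sub>m pure_state (\<alpha> \<cdot>\<^sub>v \<psi> + \<beta> \<cdot>\<^sub>v \<phi>))"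
    by blast
  have phi: "\<phi> \<in> carrier_vec d" and n1: "vnorm_sq \<phi> = 1" using assms(5) by (auto simp: is_unit_vec_def)
  show False
  proof (cases "\<exists>j. j < d \<and> j \<noteq> 0 \<and> \<phi> $ j \<noteq> 0")
    case True
    then obtain j where "j < d" "j \<noteq> 0" "\<phi> $ j \<noteq> 0" by blast
    then show False using key[of 0 d j \<phi> \<alpha> \<beta> F] assms H phi by auto
  next
    case False
    have "\<phi> $ 0 \<noteq> 0"
    proof
      assume z: "\<phi> $ 0 = 0"
      have "vnorm_sq \<phi> = (\<Sum>i<d. (cmod (\<phi> $ i))^2)" using phi by (simp add: vnorm_sq_def)
      also have "\<dots> = 0" using False z by (intro sum.neutral) auto
      finally show False using n1 by simp
    qed
    then show False using key[of 1 d 0 \<phi> \<alpha> \<beta> F] assms H phi by auto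
  qed
qed

end
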